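(* Let $n\ge 1$ and let $H_n$ be the pyrene system with $n$ pyrene fragments. For every perfect matching $M$ of $H_n$, $f(H_n,M)=h(M)$.
   Context: Pyrene system: draw the hexagonal lattice so that every hexagon has two vertical sides; horizontally adjacent hexagons then share a vertical edge. For $n\ge1$, $H_n$ is the hexagonal system (the plane graph formed by the vertices and edges of the following $4n$ hexagons) consisting of a horizontal linear row of $2n$ hexagons $h_{1,1},h_{1,2},h_{2,1},h_{2,2},\dots,h_{n,1},h_{n,2}$, consecutive ones sharing a vertical edge, together with, for each $i=1,\dots,n$, a hexagon $s_{i,1}$ lying directly above and a hexagon $s_{i,2}$ lying directly below the common edge of $h_{i,1}$ and $h_{i,2}$ (each of $s_{i,1},s_{i,2}$ shares an edge with both $h_{i,1}$ and $h_{i,2}$). Each set $\{h_{i,1},h_{i,2},s_{i,1},s_{i,2}\}$ is a pyrene fragment. For a perfect matching $M$ of a graph $G$: a forcing set of $M$ is a subset $S\subseteq M$ contained in no other perfect matching of $G$; the forcing number $f(G,M)$ is the minimum size of a forcing set of $M$. A cycle is $M$-alternating if its edges alternate between $M$ and $E(G)\setminus M$. An $M$-resonant set is a set of pairwise vertex-disjoint $M$-alternating hexagons (faces), and $h(M)$ is the maximum size of an $M$-resonant set. *)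

theory Defs
  imports Main
begin

(* Hexagonal lattice in the "brick-wall" model: vertices are integer points,
   a hexagon is identified by its lower-left corner (x,y) with x+y even and
   consists of the six vertices/edges below. Its two "vertical sides" are the
   edges at abscissae x and x+2; horizontally adjacent hexagons (x,y),(x+2,y)
   share a vertical edge. *)

type_synonym vert = "int \<times> int"
type_synonym edge = "vert set"

definition hex_vlist :: "int \<times> int \<Rightarrow> vert list" where
  "hex_vlist c = (case c of (x,y) \<Rightarrow>
     [(x,y), (x+1,y), (x+2,y), (x+2,y+1), (x+1,y+1), (x,y+1)])"

definition hex_verts :: "int \<times> int \<Rightarrow> vert set" where
  "hex_verts c = set (hex_vlist c)"

definition hex_elist :: "int \<times> int \<Rightarrow> edge list" where
  "hex_elist c = map (\<lambda>i. {hex_vlist c ! i, hex_vlist c ! ((i+1) mod 6)}) [0..<6]"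

definition hex_edges :: "int \<times> int \<Rightarrow> edge set" where
  "hex_edges c = set (hex_elist c)"

(* The 4n hexagons of the pyrene system H_n (pyrene fragment i = 0..n-1):
   h_{i,1} = (4i,0), h_{i,2} = (4i+2,0) (row of 2n hexagons),
   s_{i,1} = (4i+1,1) directly above and s_{i,2} = (4i+1,-1) directly below
   the common vertical edge {(4i+2,0),(4i+2,1)} of h_{i,1}, h_{i,2}. *)
definition pyrene_hexagons :: "nat \<Rightarrow> (int \<times> int) set" where
  "pyrene_hexagons n = (\<Union>i\<in>{..<n}.
     {(4 * int i, 0), (4 * int i + 2, 0), (4 * int i + 1, 1), (4 * int i + 1, -1)})"

definition pyrene_V :: "nat \<Rightarrow> vert set" where
  "pyrene_V n = (\<Union>c\<in>pyrene_hexagons n. hex_verts c)"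

definition pyrene_E :: "nat \<Rightarrow> edge set" where
  "pyrene_E n = (\<Union>c\<in>pyrene_hexagons n. hex_edges c)"

definition perfect_matching :: "'a set \<Rightarrow> 'a set set \<Rightarrow> 'a set set \<Rightarrow> bool" where
  "perfect_matching V E M \<longleftrightarrow> M \<subseteq> E \<and> (\<forall>v\<in>V. \<exists>!e. e \<in> M \<and> v \<in> e)"

definition forcing_set :: "'a set \<Rightarrow> 'a set set \<Rightarrow> 'a set set \<Rightarrow> 'a set set \<Rightarrow> bool" where
  "forcing_set V E M S \<longleftrightarrow> S \<subseteq> M \<and>
     (\<forall>M'. perfect_matching V E M' \<and> S \<subseteq> M' \<longrightarrow> M' = M)"

definition forcing_number :: "'a set \<Rightarrow> 'a set set \<Rightarrow> 'a set set \<Rightarrow> nat" where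
  "forcing_number V E M = Min (card ` {S. forcing_set V E M S})"

definition alternating_cycle :: "'a set set \<Rightarrow> 'a set list \<Rightarrow> bool" where
  "alternating_cycle M es \<longleftrightarrow>
     (\<forall>i<length es. (es ! i \<in> M) \<noteq> (es ! ((i+1) mod length es) \<in> M))"

definition resonant_set :: "(int \<times> int) set \<Rightarrow> edge set \<Rightarrow> (int \<times> int) set \<Rightarrow> bool" where
  "resonant_set Hs M R \<longleftrightarrow> R \<subseteq> Hs \<and>
     (\<forall>c\<in>R. alternating_cycle M (hex_elist c)) \<and>
     (\<forall>c\<in>R. \<forall>d\<in>R. c \<noteq> d \<longrightarrow> hex_verts c \<inter> hex_verts d = {})"

definition max_resonant :: "(int \<times> int) set \<Rightarrow> edge set \<Rightarrow> nat" where
  "max_resonant Hs M = Max (card ` {R. resonant_set Hs M R})"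

end

theory Submission
  imports Defs
begin

definition hE :: "int \<Rightarrow> int \<Rightarrow> edge" where "hE x y = {(x,y),(x+1,y)}"
definition vE :: "int \<Rightarrow> int \<Rightarrow> edge" where "vE x y = {(x,y),(x,y+1)}"

lemma hex_elist_eq: "hex_elist (x,y) = [hE x y, hE (x+1) y, vE (x+2) y, hE (x+1) (y+1), hE x (y+1), vE x y]"
  apply (simp add: hex_elist_def hex_vlist_def hE_def vE_def upt_rec)
  apply (auto simp: insert_commute)
  done
lemma hex_edges_eq: "hex_edges (x,y) = {hE x y, hE (x+1) y, vE (x+2) y, hE (x+1) (y+1), hE x (y+1), vE x y}"
  by (simp add: hex_edges_def hex_elist_eq)

lemma hE_eq[simp]: "hE x y = hE x' y' \<longleftrightarrow> x = x' \<and> y = y'"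
  by (auto simp: hE_def doubleton_eq_iff)
lemma vE_eq[simp]: "vE x y = vE x' y' \<longleftrightarrow> x = x' \<and> y = y'"
  by (auto simp: vE_def doubleton_eq_iff)
lemma hE_vE[simp]: "hE x y \<noteq> vE x' y'" "vE x' y' \<noteq> hE x y"
  by (auto simp: vE_def hE_def doubleton_eq_iff)
lemma mem_hE: "p \<in> hE x y \<longleftrightarrow> p = (x,y) \<or> p = (x+1,y)" by (auto simp: hE_def)
lemma mem_vE: "p \<in> vE x y \<longleftrightarrow> p = (x,y) \<or> p = (x,y+1)" by (auto simp: vE_def)
lemma hex_verts_eq: "hex_verts (x,y) = {(x,y),(x+1,y),(x+2,y),(x+2,y+1),(x+1,y+1),(x,y+1)}"
  by (simp add: hex_verts_def hex_vlist_def)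

definition loc :: "int \<Rightarrow> edge set" where
 "loc a = {hE a 0, hE (a+1) 0, hE (a+2) 0, hE (a+3) 0, hE a 1, hE (a+1) 1, hE (a+2) 1, hE (a+3) 1,
   vE a 0, vE (a+2) 0, vE (a+4) 0, vE (a+1) 1, vE (a+3) 1, hE (a+1) 2, hE (a+2) 2,
   vE (a+1) (-1), vE (a+3) (-1), hE (a+1) (-1), hE (a+2) (-1)}"

lemma loc_eq: "hex_edges (a,0) \<union> hex_edges (a+2,0) \<union> hex_edges (a+1,1) \<union> hex_edges (a+1,-1) = loc a"
  unfolding hex_edges_eq loc_def by (simp add: ac_simps insert_commute)

lemma E_eq: "pyrene_E n = (\<Union>i<n. loc (4 * int i))"
  unfolding pyrene_E_def pyrene_hexagons_def loc_eq[symmetric] by auto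

lemma E_loc: "e \<in> pyrene_E n \<longleftrightarrow> (\<exists>i<n. e \<in> loc (4 * int i))"
  unfolding E_eq by auto
lemma hE_in_E: assumes "hE x y \<in> pyrene_E n"
  shows "((y=0 \<or> y=1) \<and> 0 \<le> x \<and> x < 4 * int n) \<or> ((y = 2 \<or> y = -1) \<and> (x mod 4 = 1 \<or> x mod 4 = 2))"
proof -
  obtain i where i: "i < n" "hE x y \<in> loc (4 * int i)" using assms E_loc by blast
  have "(y = 0 \<or> y = 1) \<and> (x = 4*int i \<or> x = 4*int i+1 \<or> x = 4*int i+2 \<or> x = 4*int i+3)
     \<or> (y = 2 \<or> y = -1) \<and> (x = 4*int i+1 \<or> x = 4*int i+2)"
    using i(2) by (auto simp: loc_def)
  then show ?thesis using i(1) by (elim disjE conjE) simp_all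
qed

lemma vE_in_E: assumes "vE x y \<in> pyrene_E n"
  shows "(y = 0 \<and> even x) \<or> ((y = 1 \<or> y = -1) \<and> odd x)"
proof -
  obtain i where i: "i < n" "vE x y \<in> loc (4 * int i)" using assms E_loc by blast
  have "y = 0 \<and> (x = 4*int i \<or> x = 4*int i+2 \<or> x = 4*int i+4)
     \<or> (y = 1 \<or> y = -1) \<and> (x = 4*int i+1 \<or> x = 4*int i+3)"
    using i(2) by (auto simp: loc_def)
  then show ?thesis by (elim disjE conjE) simp_all
qed

lemma E_form: "e \<in> pyrene_E n \<Longrightarrow> \<exists>x y. e = hE x y \<or> e = vE x y"
  unfolding E_loc loc_def by blast

definition one4 :: "bool \<Rightarrow> bool \<Rightarrow> bool \<Rightarrow> bool \<Rightarrow> bool" where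
  "one4 A B C D \<longleftrightarrow> (A \<or> B \<or> C \<or> D) \<and> \<not>(A\<and>B) \<and> \<not>(A\<and>C) \<and> \<not>(A\<and>D) \<and> \<not>(B\<and>C) \<and> \<not>(B\<and>D) \<and> \<not>(C\<and>D)"

lemma vertex:
  assumes PM: "perfect_matching (pyrene_V n) (pyrene_E n) M" and v: "(x,y) \<in> pyrene_V n"
  shows "one4 (hE (x-1) y \<in> M) (hE x y \<in> M) (vE x y \<in> M) (vE x (y-1) \<in> M)"
proof -
  have ME: "M \<subseteq> pyrene_E n" and ex: "\<exists>!e. e \<in> M \<and> (x,y) \<in> e"
    using PM v unfolding perfect_matching_def by auto
  have cand: "e = hE (x-1) y \<or> e = hE x y \<or> e = vE x y \<or> e = vE x (y-1)"
    if em: "e \<in> M" and ev: "(x,y) \<in> e" for e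
  proof -
    obtain x' y' where "e = hE x' y' \<or> e = vE x' y'" using E_form ME em by blast
    then show ?thesis
    proof
      assume h: "e = hE x' y'"
      then have "(x' = x \<and> y' = y) \<or> (x' = x - 1 \<and> y' = y)" using ev by (auto simp: mem_hE)
      then show ?thesis using h by auto
    next
      assume h: "e = vE x' y'"
      then have "(x' = x \<and> y' = y) \<or> (x' = x \<and> y' = y - 1)" using ev by (auto simp: mem_vE)
      then show ?thesis using h by auto
    qed
  qed
  have in4: "(x,y) \<in> hE (x-1) y" "(x,y) \<in> hE x y" "(x,y) \<in> vE x y" "(x,y) \<in> vE x (y-1)"
    by (auto simp: mem_hE mem_vE)
  have d: "hE (x-1) y \<noteq> hE x y" "vE x y \<noteq> vE x (y-1)" by auto
  from ex obtain e where e: "e \<in> M" "(x,y) \<in> e" and u: "\<And>e'. e' \<in> M \<and> (x,y) \<in> e' \<Longrightarrow> e' = e" by blast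
  have uniq: "A = B" if "A \<in> M" "B \<in> M" "(x,y) \<in> A" "(x,y) \<in> B" for A B
    using u that by blast
  have ex4: "hE (x-1) y \<in> M \<or> hE x y \<in> M \<or> vE x y \<in> M \<or> vE x (y-1) \<in> M"
    using cand[OF e] e(1) by blast
  show ?thesis unfolding one4_def
    using ex4 uniq[OF _ _ in4(1) in4(2)] uniq[OF _ _ in4(1) in4(3)] uniq[OF _ _ in4(1) in4(4)]
      uniq[OF _ _ in4(2) in4(3)] uniq[OF _ _ in4(2) in4(4)] uniq[OF _ _ in4(3) in4(4)] d
    by auto
qed

lemma notE_notM: "perfect_matching V E M \<Longrightarrow> e \<notin> E \<Longrightarrow> e \<notin> M"
  unfolding perfect_matching_def by auto

lemma hexV: assumes "i < n" "c \<in> {(4*int i,0),(4*int i+2,0),(4*int i+1,1),(4*int i+1,-1)}"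
  shows "hex_verts c \<subseteq> pyrene_V n"
  using assms unfolding pyrene_V_def pyrene_hexagons_def by blast


lemma one4_simp: "one4 False B C D \<longleftrightarrow> one4 B C D False" "one4 A False C D \<longleftrightarrow> one4 A C D False"
  "one4 A B False D \<longleftrightarrow> one4 A B D False" by (auto simp: one4_def)

definition one3 :: "bool \<Rightarrow> bool \<Rightarrow> bool \<Rightarrow> bool" where
  "one3 A B C \<longleftrightarrow> (A \<or> B \<or> C) \<and> \<not>(A\<and>B) \<and> \<not>(A\<and>C) \<and> \<not>(B\<and>C)"

lemma one4_F: "one4 A B C False \<longleftrightarrow> one3 A B C" "one3 A B False \<longleftrightarrow> A \<noteq> B"
  by (auto simp: one4_def one3_def)

lemma frag:
  assumes PM: "perfect_matching (pyrene_V n) (pyrene_E n) M" and i: "i < n" and a: "a = 4 * int i"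
  shows "(hE (a+1) 2 \<in> M) \<noteq> (vE (a+1) 1 \<in> M)"
    "(hE (a+1) 2 \<in> M) \<noteq> (hE (a+2) 2 \<in> M)"
    "(hE (a+2) 2 \<in> M) \<noteq> (vE (a+3) 1 \<in> M)"
    "(hE (a+1) (-1) \<in> M) \<noteq> (vE (a+1) (-1) \<in> M)"
    "(hE (a+1) (-1) \<in> M) \<noteq> (hE (a+2) (-1) \<in> M)"
    "(hE (a+2) (-1) \<in> M) \<noteq> (vE (a+3) (-1) \<in> M)"
    "one3 (hE a 1 \<in> M) (hE (a+1) 1 \<in> M) (vE (a+1) 1 \<in> M)"
    "one3 (hE (a+1) 1 \<in> M) (hE (a+2) 1 \<in> M) (vE (a+2) 0 \<in> M)"
    "one3 (hE (a+2) 1 \<in> M) (hE (a+3) 1 \<in> M) (vE (a+3) 1 \<in> M)"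
    "one3 (hE a 0 \<in> M) (hE (a+1) 0 \<in> M) (vE (a+1) (-1) \<in> M)"
    "one3 (hE (a+1) 0 \<in> M) (hE (a+2) 0 \<in> M) (vE (a+2) 0 \<in> M)"
    "one3 (hE (a+2) 0 \<in> M) (hE (a+3) 0 \<in> M) (vE (a+3) (-1) \<in> M)"
    "one3 (hE (a-1) 0 \<in> M) (hE a 0 \<in> M) (vE a 0 \<in> M)"
    "one3 (hE (a-1) 1 \<in> M) (hE a 1 \<in> M) (vE a 0 \<in> M)"
    "one3 (hE (a+3) 0 \<in> M) (hE (a+4) 0 \<in> M) (vE (a+4) 0 \<in> M)"
    "one3 (hE (a+3) 1 \<in> M) (hE (a+4) 1 \<in> M) (vE (a+4) 0 \<in> M)"
    "i = 0 \<Longrightarrow> hE (a-1) 0 \<notin> M \<and> hE (a-1) 1 \<notin> M"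
    "Suc i = n \<Longrightarrow> hE (a+4) 0 \<notin> M \<and> hE (a+4) 1 \<notin> M"
proof -
  note NE = notE_notM[OF PM]
  have V1: "(a+1,2) \<in> pyrene_V n" "(a+2,2) \<in> pyrene_V n" "(a+3,2) \<in> pyrene_V n"
      "(a+1,1) \<in> pyrene_V n" "(a+2,1) \<in> pyrene_V n" "(a+3,1) \<in> pyrene_V n"
    using hexV[OF i, of "(4*int i+1,1)"] a by (auto simp: hex_verts_eq ac_simps)
  have V2: "(a+1,-1) \<in> pyrene_V n" "(a+2,-1) \<in> pyrene_V n" "(a+3,-1) \<in> pyrene_V n"
      "(a+1,0) \<in> pyrene_V n" "(a+2,0) \<in> pyrene_V n" "(a+3,0) \<in> pyrene_V n"
    using hexV[OF i, of "(4*int i+1,-1)"] a by (auto simp: hex_verts_eq ac_simps)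
  have V3: "(a,0) \<in> pyrene_V n" "(a,1) \<in> pyrene_V n"
    using hexV[OF i, of "(4*int i,0)"] a by (auto simp: hex_verts_eq ac_simps)
  have V4: "(a+4,0) \<in> pyrene_V n" "(a+4,1) \<in> pyrene_V n"
    using hexV[OF i, of "(4*int i+2,0)"] a by (auto simp: hex_verts_eq ac_simps)
  have a4: "a mod 4 = 0" using a by simp
  have N1: "hE a 2 \<notin> M" "vE (a+1) 2 \<notin> M" "vE (a+2) 2 \<notin> M" "vE (a+2) 1 \<notin> M"
    "hE (a+3) 2 \<notin> M" "vE (a+3) 2 \<notin> M"
    using a4 by (auto intro!: NE dest!: hE_in_E vE_in_E)
  have N2: "hE a (-1) \<notin> M" "vE (a+1) (-2) \<notin> M" "vE (a+2) (-2) \<notin> M" "vE (a+2) (-1) \<notin> M"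
    "hE (a+3) (-1) \<notin> M" "vE (a+3) (-2) \<notin> M"
    using a4 by (auto intro!: NE dest!: hE_in_E vE_in_E)
  have N3: "vE (a+1) 0 \<notin> M" "vE (a+3) 0 \<notin> M" "vE a (-1) \<notin> M" "vE a 1 \<notin> M"
     "vE (a+4) (-1) \<notin> M" "vE (a+4) 1 \<notin> M"
    using a4 by (auto intro!: NE dest!: hE_in_E vE_in_E)
  note N = N1 N2 N3
  have e: "a+1-1 = a" "a+2-1 = a+1" "a+3-1 = a+2" "a+4-1 = a+3" "(2::int)-1 = 1" "(0::int) - 1 = -1"
     "(-1::int) - 1 = -2" "(1::int) - 1 = 0" by simp_all
  show "(hE (a+1) 2 \<in> M) \<noteq> (vE (a+1) 1 \<in> M)" using vertex[OF PM V1(1), unfolded e] N by (auto simp add: one4_def)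
  show "(hE (a+1) 2 \<in> M) \<noteq> (hE (a+2) 2 \<in> M)" using vertex[OF PM V1(2), unfolded e] N by (auto simp add: one4_def)
  show "(hE (a+2) 2 \<in> M) \<noteq> (vE (a+3) 1 \<in> M)" using vertex[OF PM V1(3), unfolded e] N by (auto simp add: one4_def)
  show "(hE (a+1) (-1) \<in> M) \<noteq> (vE (a+1) (-1) \<in> M)" using vertex[OF PM V2(1), unfolded e] N by (auto simp add: one4_def)
  show "(hE (a+1) (-1) \<in> M) \<noteq> (hE (a+2) (-1) \<in> M)" using vertex[OF PM V2(2), unfolded e] N by (auto simp add: one4_def)
  show "(hE (a+2) (-1) \<in> M) \<noteq> (vE (a+3) (-1) \<in> M)" using vertex[OF PM V2(3), unfolded e] N by (auto simp add: one4_def)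
  show "one3 (hE a 1 \<in> M) (hE (a+1) 1 \<in> M) (vE (a+1) 1 \<in> M)" using vertex[OF PM V1(4), unfolded e] N by (simp add: one4_def one3_def)
  show "one3 (hE (a+1) 1 \<in> M) (hE (a+2) 1 \<in> M) (vE (a+2) 0 \<in> M)" using vertex[OF PM V1(5), unfolded e] N by (simp add: one4_def one3_def)
  show "one3 (hE (a+2) 1 \<in> M) (hE (a+3) 1 \<in> M) (vE (a+3) 1 \<in> M)" using vertex[OF PM V1(6), unfolded e] N by (simp add: one4_def one3_def)
  show "one3 (hE a 0 \<in> M) (hE (a+1) 0 \<in> M) (vE (a+1) (-1) \<in> M)" using vertex[OF PM V2(4), unfolded e] N by (simp add: one4_def one3_def)
  show "one3 (hE (a+1) 0 \<in> M) (hE (a+2) 0 \<in> M) (vE (a+2) 0 \<in> M)" using vertex[OF PM V2(5), unfolded e] N by (simp add: one4_def one3_def)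
  show "one3 (hE (a+2) 0 \<in> M) (hE (a+3) 0 \<in> M) (vE (a+3) (-1) \<in> M)" using vertex[OF PM V2(6), unfolded e] N by (simp add: one4_def one3_def)
  show "one3 (hE (a-1) 0 \<in> M) (hE a 0 \<in> M) (vE a 0 \<in> M)" using vertex[OF PM V3(1), unfolded e] N by (simp add: one4_def one3_def)
  show "one3 (hE (a-1) 1 \<in> M) (hE a 1 \<in> M) (vE a 0 \<in> M)" using vertex[OF PM V3(2), unfolded e] N by (simp add: one4_def one3_def)
  show "one3 (hE (a+3) 0 \<in> M) (hE (a+4) 0 \<in> M) (vE (a+4) 0 \<in> M)" using vertex[OF PM V4(1), unfolded e] N by (simp add: one4_def one3_def)
  show "one3 (hE (a+3) 1 \<in> M) (hE (a+4) 1 \<in> M) (vE (a+4) 0 \<in> M)" using vertex[OF PM V4(2), unfolded e] N by (simp add: one4_def one3_def)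
  show "i = 0 \<Longrightarrow> hE (a-1) 0 \<notin> M \<and> hE (a-1) 1 \<notin> M"
    using a by (auto intro!: NE dest!: hE_in_E)
  show "Suc i = n \<Longrightarrow> hE (a+4) 0 \<notin> M \<and> hE (a+4) 1 \<notin> M"
    using a by (auto intro!: NE dest!: hE_in_E)
qed

lemma four_Suc: "4 * int (Suc i) = 4 * int i + 4" by simp

lemma mt_step:
  assumes PM: "perfect_matching (pyrene_V n) (pyrene_E n) M" and i: "i < n"
    and m: "hE (4*int i) 1 \<in> M" "hE (4*int i) 0 \<notin> M"
  shows "Suc i < n \<and> hE (4*int (Suc i)) 1 \<in> M \<and> hE (4*int (Suc i)) 0 \<notin> M"
proof -
  define a where "a = 4 * int i"
  note F = frag[OF PM i a_def, unfolded one3_def]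
  have "hE (a+4) 1 \<in> M \<and> hE (a+4) 0 \<notin> M" using F m unfolding a_def[symmetric] by blast
  moreover have "Suc i \<noteq> n" using F m calculation unfolding a_def[symmetric] by blast
  ultimately show ?thesis using i unfolding four_Suc a_def by simp
qed

lemma mb_step:
  assumes PM: "perfect_matching (pyrene_V n) (pyrene_E n) M" and i: "i < n"
    and m: "hE (4*int i) 0 \<in> M" "hE (4*int i) 1 \<notin> M"
  shows "Suc i < n \<and> hE (4*int (Suc i)) 0 \<in> M \<and> hE (4*int (Suc i)) 1 \<notin> M"
proof -
  define a where "a = 4 * int i"
  note F = frag[OF PM i a_def, unfolded one3_def]
  have "hE (a+4) 0 \<in> M \<and> hE (a+4) 1 \<notin> M" using F m unfolding a_def[symmetric] by blast
  moreover have "Suc i \<noteq> n" using F m calculation unfolding a_def[symmetric] by blast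
  ultimately show ?thesis using i unfolding four_Suc a_def by simp
qed

lemma no_mixed:
  assumes PM: "perfect_matching (pyrene_V n) (pyrene_E n) M" and i: "i < n"
  shows "hE (4*int i) 0 \<in> M \<longleftrightarrow> hE (4*int i) 1 \<in> M"
proof -
  have t: "i + k < n \<and> hE (4*int (i+k)) 1 \<in> M \<and> hE (4*int (i+k)) 0 \<notin> M"
    if "hE (4*int i) 1 \<in> M" "hE (4*int i) 0 \<notin> M" for k
    using that
  proof (induction k)
    case 0 then show ?case using i by simp
  next
    case (Suc k) then show ?case using mt_step[OF PM, of "i+k"] by simp
  qed
  have b: "i + k < n \<and> hE (4*int (i+k)) 0 \<in> M \<and> hE (4*int (i+k)) 1 \<notin> M"
    if "hE (4*int i) 0 \<in> M" "hE (4*int i) 1 \<notin> M" for k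
    using that
  proof (induction k)
    case 0 then show ?case using i by simp
  next
    case (Suc k) then show ?case using mb_step[OF PM, of "i+k"] by simp
  qed
  show ?thesis using t[of n] b[of n] by auto
qed

lemma junction:
  assumes PM: "perfect_matching (pyrene_V n) (pyrene_E n) M" and i: "i < n" and a: "a = 4 * int i"
  shows "hE a 0 \<in> M \<longleftrightarrow> hE a 1 \<in> M" "hE (a+3) 0 \<in> M \<longleftrightarrow> hE (a+3) 1 \<in> M"
proof -
  show "hE a 0 \<in> M \<longleftrightarrow> hE a 1 \<in> M" using no_mixed[OF PM i] a by simp
  note F = frag[OF PM i a, unfolded one3_def]
  show "hE (a+3) 0 \<in> M \<longleftrightarrow> hE (a+3) 1 \<in> M"
  proof (cases "Suc i < n")
    case True
    then have "hE (a+4) 0 \<in> M \<longleftrightarrow> hE (a+4) 1 \<in> M" using no_mixed[OF PM True, unfolded four_Suc] a by simp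
    then show ?thesis using F by blast
  next
    case False
    then have "Suc i = n" using i by simp
    then show ?thesis using F by blast
  qed
qed


lemma flip_abstract:
  assumes PM: "perfect_matching V E M" and HE: "H \<subseteq> E"
    and loc2: "\<And>v. v \<in> V \<Longrightarrow> v \<in> \<Union>H \<Longrightarrow> \<exists>f g. {e\<in>H. v \<in> e} = {f,g} \<and> ((f\<in>M) \<longleftrightarrow> (g \<notin> M))"
  shows "perfect_matching V E ((M - H) \<union> (H - M))"
  unfolding perfect_matching_def
proof (intro conjI ballI)
  show "M - H \<union> (H - M) \<subseteq> E" using PM HE unfolding perfect_matching_def by auto
next
  fix v assume v: "v \<in> V"
  have ex: "\<exists>!e. e \<in> M \<and> v \<in> e" using PM v unfolding perfect_matching_def by blast
  then obtain e0 where e0: "e0 \<in> M" "v \<in> e0" by blast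
  have u: "e = e0" if "e \<in> M" "v \<in> e" for e using ex e0 that by blast
  show "\<exists>!e. e \<in> M - H \<union> (H - M) \<and> v \<in> e"
  proof (cases "v \<in> \<Union>H")
    case False
    then have "e \<in> M - H \<union> (H - M) \<and> v \<in> e \<longleftrightarrow> e \<in> M \<and> v \<in> e" for e by blast
    then show ?thesis using ex by simp
  next
    case True
    from loc2[OF v True] obtain f g where fg: "{e\<in>H. v \<in> e} = {f,g}" "(f\<in>M) \<longleftrightarrow> (g \<notin> M)"
      by (elim exE conjE)
    have fH: "f \<in> H" "v \<in> f" "g \<in> H" "v \<in> g" using fg(1) by blast+
    have inH: "e \<in> H \<Longrightarrow> v \<in> e \<Longrightarrow> e = f \<or> e = g" for e using fg(1) by blast
    show ?thesis
    proof (cases "f \<in> M")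
      case True
      then have gM: "g \<notin> M" using fg(2) by blast
      have "e0 = f" using u[OF True fH(2)] by simp
      show ?thesis
      proof (rule ex1I[of _ g])
        show "g \<in> M - H \<union> (H - M) \<and> v \<in> g" using fH gM by blast
      next
        fix e assume e: "e \<in> M - H \<union> (H - M) \<and> v \<in> e"
        show "e = g"
        proof (cases "e \<in> H")
          case True then have "e = f \<or> e = g" using e inH by blast
          then show ?thesis using e True \<open>f \<in> M\<close> by blast
        next
          case False then have "e \<in> M" using e by blast
          then have "e = f" using u e \<open>e0 = f\<close> by blast
          then show ?thesis using False fH by blast
        qed
      qed
    next
      case False
      then have gM: "g \<in> M" using fg(2) by blast
      have "e0 = g" using u[OF gM fH(4)] by simp
      show ?thesis
      proof (rule ex1I[of _ f])
        show "f \<in> M - H \<union> (H - M) \<and> v \<in> f" using fH False by blast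
      next
        fix e assume e: "e \<in> M - H \<union> (H - M) \<and> v \<in> e"
        show "e = f"
        proof (cases "e \<in> H")
          case True then have "e = f \<or> e = g" using e inH by blast
          then show ?thesis using e True gM by blast
        next
          case False then have "e \<in> M" using e by blast
          then have "e = g" using u e \<open>e0 = g\<close> by blast
          then show ?thesis using False fH by blast
        qed
      qed
    qed
  qed
qed

lemma all6: "(\<forall>i<(6::nat). P i) = (P 0 \<and> P 1 \<and> P 2 \<and> P 3 \<and> P 4 \<and> P 5)"
  by (auto simp: numeral_eq_Suc All_less_Suc)
lemma alt6: "alternating_cycle M [e0,e1,e2,e3,e4,e5] \<longleftrightarrow>
   ((e0 \<in> M) \<noteq> (e1 \<in> M)) \<and> ((e1 \<in> M) \<noteq> (e2 \<in> M)) \<and> ((e2 \<in> M) \<noteq> (e3 \<in> M)) \<and>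
   ((e3 \<in> M) \<noteq> (e4 \<in> M)) \<and> ((e4 \<in> M) \<noteq> (e5 \<in> M)) \<and> ((e5 \<in> M) \<noteq> (e0 \<in> M))"
proof -
  have l: "length [e0,e1,e2,e3,e4,e5] = 6" by simp
  show ?thesis unfolding alternating_cycle_def l all6 by simp
qed

lemma alt_iff: "alternating_cycle M (hex_elist (x,y)) \<longleftrightarrow>
   ((hE x y \<in> M) \<noteq> (hE (x+1) y \<in> M)) \<and> ((hE (x+1) y \<in> M) \<noteq> (vE (x+2) y \<in> M)) \<and>
   ((vE (x+2) y \<in> M) \<noteq> (hE (x+1) (y+1) \<in> M)) \<and> ((hE (x+1) (y+1) \<in> M) \<noteq> (hE x (y+1) \<in> M)) \<and>
   ((hE x (y+1) \<in> M) \<noteq> (vE x y \<in> M)) \<and> ((vE x y \<in> M) \<noteq> (hE x y \<in> M))"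
  by (simp only: hex_elist_eq alt6)

lemma hex_edge_sub: "e \<in> hex_edges c \<Longrightarrow> e \<subseteq> hex_verts c \<and> e \<noteq> {}"
  by (cases c) (auto simp: hex_edges_eq hex_verts_eq hE_def vE_def)

lemma hex_inc:
  assumes "v \<in> hex_verts (x,y)"
  shows "\<exists>f g. {e \<in> hex_edges (x,y). v \<in> e} = {f,g} \<and>
     ((f = vE x y \<and> g = hE x y) \<or> (f = hE x y \<and> g = hE (x+1) y) \<or> (f = hE (x+1) y \<and> g = vE (x+2) y)
    \<or> (f = vE (x+2) y \<and> g = hE (x+1) (y+1)) \<or> (f = hE (x+1) (y+1) \<and> g = hE x (y+1))
    \<or> (f = hE x (y+1) \<and> g = vE x y))"
proof -
  have "v = (x,y) \<or> v = (x+1,y) \<or> v = (x+2,y) \<or> v = (x+2,y+1) \<or> v = (x+1,y+1) \<or> v = (x,y+1)"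
    using assms by (simp add: hex_verts_eq)
  then show ?thesis
  proof (elim disjE)
    assume v: "v = (x,y)"
    have "{e \<in> hex_edges (x,y). v \<in> e} = {vE x y, hE x y}" unfolding v hex_edges_eq by (auto simp: mem_hE mem_vE)
    then show ?thesis by blast
  next
    assume v: "v = (x+1,y)"
    have "{e \<in> hex_edges (x,y). v \<in> e} = {hE x y, hE (x+1) y}" unfolding v hex_edges_eq by (auto simp: mem_hE mem_vE)
    then show ?thesis by blast
  next
    assume v: "v = (x+2,y)"
    have "{e \<in> hex_edges (x,y). v \<in> e} = {hE (x+1) y, vE (x+2) y}" unfolding v hex_edges_eq by (auto simp: mem_hE mem_vE)
    then show ?thesis by blast
  next
    assume v: "v = (x+2,y+1)"
    have "{e \<in> hex_edges (x,y). v \<in> e} = {vE (x+2) y, hE (x+1) (y+1)}" unfolding v hex_edges_eq by (auto simp: mem_hE mem_vE)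
    then show ?thesis by blast
  next
    assume v: "v = (x+1,y+1)"
    have "{e \<in> hex_edges (x,y). v \<in> e} = {hE (x+1) (y+1), hE x (y+1)}" unfolding v hex_edges_eq by (auto simp: mem_hE mem_vE)
    then show ?thesis by blast
  next
    assume v: "v = (x,y+1)"
    have "{e \<in> hex_edges (x,y). v \<in> e} = {hE x (y+1), vE x y}" unfolding v hex_edges_eq by (auto simp: mem_hE mem_vE)
    then show ?thesis by blast
  qed
qed

lemma flip_hex:
  assumes PM: "perfect_matching (pyrene_V n) (pyrene_E n) M" and c: "c \<in> pyrene_hexagons n"
    and alt: "alternating_cycle M (hex_elist c)"
  shows "perfect_matching (pyrene_V n) (pyrene_E n) ((M - hex_edges c) \<union> (hex_edges c - M))"
proof (rule flip_abstract[OF PM])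
  show "hex_edges c \<subseteq> pyrene_E n" using c unfolding pyrene_E_def by blast
next
  obtain x y where xy: "c = (x,y)" by (cases c)
  fix v assume "v \<in> pyrene_V n" "v \<in> \<Union> (hex_edges c)"
  then have "v \<in> hex_verts (x,y)" using hex_edge_sub xy by blast
  from hex_inc[OF this] obtain f g where fg: "{e \<in> hex_edges (x,y). v \<in> e} = {f,g}"
     "((f = vE x y \<and> g = hE x y) \<or> (f = hE x y \<and> g = hE (x+1) y) \<or> (f = hE (x+1) y \<and> g = vE (x+2) y)
    \<or> (f = vE (x+2) y \<and> g = hE (x+1) (y+1)) \<or> (f = hE (x+1) (y+1) \<and> g = hE x (y+1))
    \<or> (f = hE x (y+1) \<and> g = vE x y))" by (elim exE conjE)
  have "(f \<in> M) \<longleftrightarrow> (g \<notin> M)" using fg(2) alt[unfolded xy alt_iff] by (elim disjE conjE) simp_all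
  then show "\<exists>f g. {e \<in> hex_edges c. v \<in> e} = {f, g} \<and> (f \<in> M) = (g \<notin> M)" using fg(1) xy by blast
qed




lemma frag_det:
  assumes PM: "perfect_matching (pyrene_V n) (pyrene_E n) M" and i: "i < n" and a: "a = 4 * int i"
  shows "hE a 1 \<in> M \<longleftrightarrow> hE a 0 \<in> M"
    "hE (a+3) 1 \<in> M \<longleftrightarrow> hE (a+3) 0 \<in> M"
    "vE a 0 \<in> M \<longleftrightarrow> hE (a-1) 0 \<notin> M \<and> hE a 0 \<notin> M"
    "vE (a+4) 0 \<in> M \<longleftrightarrow> hE (a+3) 0 \<notin> M \<and> hE (a+4) 0 \<notin> M"
    "vE (a+1) 1 \<in> M \<longleftrightarrow> hE a 0 \<notin> M \<and> hE (a+1) 1 \<notin> M"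
    "hE (a+1) 2 \<in> M \<longleftrightarrow> hE a 0 \<in> M \<or> hE (a+1) 1 \<in> M"
    "hE (a+2) 2 \<in> M \<longleftrightarrow> hE a 0 \<notin> M \<and> hE (a+1) 1 \<notin> M"
    "vE (a+3) 1 \<in> M \<longleftrightarrow> hE a 0 \<in> M \<or> hE (a+1) 1 \<in> M"
    "hE (a+2) 1 \<in> M \<longleftrightarrow> hE (a+3) 0 \<notin> M \<and> hE a 0 \<notin> M \<and> hE (a+1) 1 \<notin> M"
    "vE (a+2) 0 \<in> M \<longleftrightarrow> hE (a+1) 1 \<notin> M \<and> hE (a+2) 1 \<notin> M"
    "vE (a+1) (-1) \<in> M \<longleftrightarrow> hE a 0 \<notin> M \<and> hE (a+1) 0 \<notin> M"
    "hE (a+1) (-1) \<in> M \<longleftrightarrow> hE a 0 \<in> M \<or> hE (a+1) 0 \<in> M"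
    "hE (a+2) (-1) \<in> M \<longleftrightarrow> hE a 0 \<notin> M \<and> hE (a+1) 0 \<notin> M"
    "vE (a+3) (-1) \<in> M \<longleftrightarrow> hE a 0 \<in> M \<or> hE (a+1) 0 \<in> M"
    "hE (a+2) 0 \<in> M \<longleftrightarrow> hE (a+3) 0 \<notin> M \<and> hE a 0 \<notin> M \<and> hE (a+1) 0 \<notin> M"
    "hE a 0 \<in> M \<Longrightarrow> hE (a+3) 0 \<notin> M \<and> hE (a+1) 1 \<notin> M \<and> hE (a+1) 0 \<notin> M"
    "hE (a+3) 0 \<in> M \<Longrightarrow> hE (a+1) 1 \<notin> M \<and> hE (a+1) 0 \<notin> M"
    "hE a 0 \<notin> M \<Longrightarrow> hE (a+3) 0 \<notin> M \<Longrightarrow> vE (a+2) 0 \<notin> M"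
proof -
  note F = frag[OF PM i a, unfolded one3_def]
  note J = junction[OF PM i a]
  show "hE a 1 \<in> M \<longleftrightarrow> hE a 0 \<in> M" using J by sat
  show "hE (a+3) 1 \<in> M \<longleftrightarrow> hE (a+3) 0 \<in> M" using J by sat
  show "vE a 0 \<in> M \<longleftrightarrow> hE (a-1) 0 \<notin> M \<and> hE a 0 \<notin> M" using F by sat
  show "vE (a+4) 0 \<in> M \<longleftrightarrow> hE (a+3) 0 \<notin> M \<and> hE (a+4) 0 \<notin> M" using F by sat
  show "vE (a+1) 1 \<in> M \<longleftrightarrow> hE a 0 \<notin> M \<and> hE (a+1) 1 \<notin> M" using F J by sat
  show "hE (a+1) 2 \<in> M \<longleftrightarrow> hE a 0 \<in> M \<or> hE (a+1) 1 \<in> M" using F J by sat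
  show "hE (a+2) 2 \<in> M \<longleftrightarrow> hE a 0 \<notin> M \<and> hE (a+1) 1 \<notin> M" using F J by sat
  show "vE (a+3) 1 \<in> M \<longleftrightarrow> hE a 0 \<in> M \<or> hE (a+1) 1 \<in> M" using F J by sat
  show "hE (a+2) 1 \<in> M \<longleftrightarrow> hE (a+3) 0 \<notin> M \<and> hE a 0 \<notin> M \<and> hE (a+1) 1 \<notin> M" using F J by sat
  show "vE (a+2) 0 \<in> M \<longleftrightarrow> hE (a+1) 1 \<notin> M \<and> hE (a+2) 1 \<notin> M" using F J by sat
  show "vE (a+1) (-1) \<in> M \<longleftrightarrow> hE a 0 \<notin> M \<and> hE (a+1) 0 \<notin> M" using F J by sat
  show "hE (a+1) (-1) \<in> M \<longleftrightarrow> hE a 0 \<in> M \<or> hE (a+1) 0 \<in> M" using F J by sat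
  show "hE (a+2) (-1) \<in> M \<longleftrightarrow> hE a 0 \<notin> M \<and> hE (a+1) 0 \<notin> M" using F J by sat
  show "vE (a+3) (-1) \<in> M \<longleftrightarrow> hE a 0 \<in> M \<or> hE (a+1) 0 \<in> M" using F J by sat
  show "hE (a+2) 0 \<in> M \<longleftrightarrow> hE (a+3) 0 \<notin> M \<and> hE a 0 \<notin> M \<and> hE (a+1) 0 \<notin> M" using F J by sat
  show "hE a 0 \<in> M \<Longrightarrow> hE (a+3) 0 \<notin> M \<and> hE (a+1) 1 \<notin> M \<and> hE (a+1) 0 \<notin> M" using F J by sat
  show "hE (a+3) 0 \<in> M \<Longrightarrow> hE (a+1) 1 \<notin> M \<and> hE (a+1) 0 \<notin> M" using F J by sat
  show "hE a 0 \<notin> M \<Longrightarrow> hE (a+3) 0 \<notin> M \<Longrightarrow> vE (a+2) 0 \<notin> M" using F J by sat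
qed





definition Bt :: "edge set \<Rightarrow> nat \<Rightarrow> bool" where "Bt M i \<longleftrightarrow> hE (4*int i) 0 \<in> M"
definition Ct :: "edge set \<Rightarrow> nat \<Rightarrow> bool" where "Ct M i \<longleftrightarrow> hE (4*int i+3) 0 \<in> M"

definition inR :: "edge set \<Rightarrow> nat \<Rightarrow> int \<times> int \<Rightarrow> bool" where
  "inR M i c \<longleftrightarrow> (Bt M i \<and> c = (4*int i,0)) \<or> (\<not> Bt M i \<and> Ct M i \<and> c = (4*int i+2,0))
     \<or> (\<not> Bt M i \<and> \<not> Ct M i \<and> (c = (4*int i+1,1) \<or> c = (4*int i+1,-1)))"

definition R0 :: "nat \<Rightarrow> edge set \<Rightarrow> (int \<times> int) set" where
  "R0 n M = {c. \<exists>i<n. inR M i c}"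

definition gM :: "edge set \<Rightarrow> int \<times> int \<Rightarrow> edge" where
  "gM M c = (case c of (x,y) \<Rightarrow> if y = 1 then (if hE x 1 \<in> M then hE x 1 else hE (x+1) 1)
     else if y = -1 then (if hE x 0 \<in> M then hE x 0 else hE (x+1) 0)
     else if x mod 4 = 0 then hE x 0 else hE (x+1) 0)"

lemma hex_disj: "x+2 < x' \<Longrightarrow> hex_verts (x,y) \<inter> hex_verts (x',y') = {}"
   "y+1 < y' \<Longrightarrow> hex_verts (x,y) \<inter> hex_verts (x',y') = {}"
  by (auto simp: hex_verts_eq)

lemma inR_alt:
  assumes PM: "perfect_matching (pyrene_V n) (pyrene_E n) M" and i: "i < n" and c: "inR M i c"
  shows "alternating_cycle M (hex_elist c)"
proof -
  define a where "a = 4 * int i"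
  note D = frag_det[OF PM i a_def]
  from c consider "hE a 0 \<in> M" "c = (a,0)" | "hE a 0 \<notin> M" "hE (a+3) 0 \<in> M" "c = (a+2,0)"
     | "hE a 0 \<notin> M" "hE (a+3) 0 \<notin> M" "c = (a+1,1)" | "hE a 0 \<notin> M" "hE (a+3) 0 \<notin> M" "c = (a+1,-1)"
    unfolding inR_def Bt_def Ct_def a_def by blast
  then show ?thesis
  proof cases
    case 1 then show ?thesis using D by (simp add: alt_iff)
  next
    case 2 then show ?thesis using D by (simp add: alt_iff ac_simps)
  next
    case 3 then show ?thesis using D by (simp add: alt_iff ac_simps)
  next
    case 4 then show ?thesis using D by (simp add: alt_iff ac_simps)
  qed
qed


lemma inR_x: "inR M i c \<Longrightarrow> 4*int i \<le> fst c \<and> fst c \<le> 4*int i+2 \<and> (fst c = 4*int i+2 \<longrightarrow> Ct M i)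
   \<and> (fst c = 4*int i \<longrightarrow> Bt M i)"
  unfolding inR_def by auto

lemma disj_lt:
  assumes PM: "perfect_matching (pyrene_V n) (pyrene_E n) M" and ij: "i < j" "j < n"
    and c: "inR M i c" and d: "inR M j d"
  shows "hex_verts c \<inter> hex_verts d = {}"
proof (cases "fst c + 2 < fst d")
  case True then show ?thesis using hex_disj(1)[of "fst c" "fst d" "snd c" "snd d"] by simp
next
  case False
  have "4 * int i + 4 \<le> 4 * int j" using ij by simp
  then have "j = Suc i" "fst c = 4*int i+2" "fst d = 4*int j" using False inR_x[OF c] inR_x[OF d] by auto
  then have "Ct M i" "Bt M (Suc i)" using inR_x[OF c] inR_x[OF d] by auto
  then have "hE (4*int i + 3) 0 \<in> M" "hE (4*int i + 4) 0 \<in> M" unfolding Ct_def Bt_def four_Suc by auto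
  moreover have "i < n" using ij by simp
  ultimately show ?thesis using frag(15)[OF PM \<open>i<n\<close> refl] unfolding one3_def by blast
qed

lemma R0_res:
  assumes PM: "perfect_matching (pyrene_V n) (pyrene_E n) M"
  shows "resonant_set (pyrene_hexagons n) M (R0 n M)"
  unfolding resonant_set_def
proof (intro conjI ballI impI)
  show "R0 n M \<subseteq> pyrene_hexagons n"
    unfolding R0_def inR_def pyrene_hexagons_def by auto
next
  fix c assume "c \<in> R0 n M"
  then obtain i where "i < n" "inR M i c" unfolding R0_def by blast
  then show "alternating_cycle M (hex_elist c)" using inR_alt[OF PM] by blast
next
  fix c d assume c: "c \<in> R0 n M" and d: "d \<in> R0 n M" and cd: "c \<noteq> d"
  obtain i where i: "i < n" "inR M i c" using c unfolding R0_def by blast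
  obtain j where j: "j < n" "inR M j d" using d unfolding R0_def by blast
  consider "i < j" | "i = j" | "j < i" by linarith
  then show "hex_verts c \<inter> hex_verts d = {}"
  proof cases
    case 1 then show ?thesis using disj_lt[OF PM 1 j(1) i(2) j(2)] by simp
  next
    case 3 then show ?thesis using disj_lt[OF PM 3 i(1) j(2) i(2)] by blast
  next
    case 2
    then have "c = (4*int i+1,1) \<and> d = (4*int i+1,-1) \<or> d = (4*int i+1,1) \<and> c = (4*int i+1,-1)"
      using i(2) j(2) cd unfolding inR_def by auto
    then show ?thesis by (auto simp: hex_verts_eq)
  qed
qed

lemma g_in:
  assumes PM: "perfect_matching (pyrene_V n) (pyrene_E n) M" and c: "c \<in> R0 n M"
  shows "gM M c \<in> M"
proof -
  obtain i where i: "i < n" "inR M i c" using c unfolding R0_def by blast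
  define a where "a = 4 * int i"
  note D = frag_det[OF PM i(1) a_def]
  have a4: "a mod 4 = 0" "(a+2) mod 4 \<noteq> 0" unfolding a_def by simp_all
  from i(2) consider "hE a 0 \<in> M" "c = (a,0)" | "hE a 0 \<notin> M" "hE (a+3) 0 \<in> M" "c = (a+2,0)"
     | "hE a 0 \<notin> M" "hE (a+3) 0 \<notin> M" "c = (a+1,1)" | "hE a 0 \<notin> M" "hE (a+3) 0 \<notin> M" "c = (a+1,-1)"
    unfolding inR_def Bt_def Ct_def a_def by blast
  then show ?thesis
  proof cases
    case 1 then show ?thesis using a4 by (simp add: gM_def)
  next
    case 2 then show ?thesis using a4 by (simp add: gM_def ac_simps)
  next
    case 3 then show ?thesis using D by (simp add: gM_def ac_simps)
  next
    case 4 then show ?thesis using D by (simp add: gM_def ac_simps)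
  qed
qed


lemma forcing0:
  assumes PM: "perfect_matching (pyrene_V n) (pyrene_E n) M"
    and PM': "perfect_matching (pyrene_V n) (pyrene_E n) M'"
    and S: "gM M ` R0 n M \<subseteq> M'"
  shows "M' = M"
proof -
  have inS: "gM M c \<in> M'" if "i < n" "inR M i c" for i c
    using S that unfolding R0_def by blast
  have loc_agree: "e \<in> M' \<longleftrightarrow> e \<in> M" if i: "i < n" and e: "e \<in> loc (4 * int i)" for i e
  proof -
    have BC: "(hE (4*int j) 0 \<in> M' \<longleftrightarrow> hE (4*int j) 0 \<in> M) \<and> (hE (4*int j+3) 0 \<in> M' \<longleftrightarrow> hE (4*int j+3) 0 \<in> M)"
      if j: "j < n" for j
    proof -
      define b where "b = 4 * int j"
      note D = frag_det[OF PM j b_def] and D' = frag_det[OF PM' j b_def]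
      have b4: "b mod 4 = 0" "(b+2) mod 4 \<noteq> 0" unfolding b_def by simp_all
      consider (B) "hE b 0 \<in> M" | (C) "hE b 0 \<notin> M" "hE (b+3) 0 \<in> M" | (A) "hE b 0 \<notin> M" "hE (b+3) 0 \<notin> M"
        by blast
      then have "(hE b 0 \<in> M' \<longleftrightarrow> hE b 0 \<in> M) \<and> (hE (b+3) 0 \<in> M' \<longleftrightarrow> hE (b+3) 0 \<in> M)"
      proof cases
        case B
        then have "inR M j (b,0)" unfolding inR_def Bt_def b_def by simp
        then have "hE b 0 \<in> M'" using inS[OF j] b4 by (force simp: gM_def)
        then show ?thesis using B D(16) D'(16) by blast
      next
        case C
        then have "inR M j (b+2,0)" unfolding inR_def Bt_def Ct_def b_def by simp
        then have "hE (b+3) 0 \<in> M'" using inS[OF j] b4 by (force simp: gM_def ac_simps)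
        then show ?thesis using C D(16) D'(16) by blast
      next
        case A
        then have "inR M j (b+1,1)" "inR M j (b+1,-1)" unfolding inR_def Bt_def Ct_def b_def by simp_all
        then have g1: "gM M (b+1,1) \<in> M'" and g2: "gM M (b+1,-1) \<in> M'" using inS[OF j] by blast+
        have "hE (b+1) 1 \<in> M' \<or> hE (b+2) 1 \<in> M'" using g1 by (simp add: gM_def ac_simps split: if_splits)
        then have "hE b 0 \<notin> M' \<and> hE (b+3) 0 \<notin> M'" using D'(9) D'(16) D'(17) by blast
        then show ?thesis using A by blast
      qed
      then show ?thesis unfolding b_def .
    qed
    define a where "a = 4 * int i"
    note D = frag_det[OF PM i a_def] and D' = frag_det[OF PM' i a_def]
    have B0: "hE a 0 \<in> M' \<longleftrightarrow> hE a 0 \<in> M" and B3: "hE (a+3) 0 \<in> M' \<longleftrightarrow> hE (a+3) 0 \<in> M"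
      using BC[OF i] unfolding a_def by auto
    have BL: "hE (a-1) 0 \<in> M' \<longleftrightarrow> hE (a-1) 0 \<in> M"
    proof (cases i)
      case 0 then show ?thesis using frag(17)[OF PM i a_def] frag(17)[OF PM' i a_def] by blast
    next
      case (Suc k)
      have k: "k < n" using i Suc by simp
      have e1: "a - 1 = 4 * int k + 3" using Suc unfolding a_def by simp
      show ?thesis unfolding e1 using BC[OF k] by blast
    qed
    have BR: "hE (a+4) 0 \<in> M' \<longleftrightarrow> hE (a+4) 0 \<in> M"
    proof (cases "Suc i < n")
      case False
      then have "Suc i = n" using i by simp
      then show ?thesis using frag(18)[OF PM i a_def] frag(18)[OF PM' i a_def] by blast
    next
      case True
      then show ?thesis using BC[of "Suc i"] unfolding a_def by (simp add: ac_simps)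
    qed
    have T1: "hE (a+1) 1 \<in> M' \<longleftrightarrow> hE (a+1) 1 \<in> M" and B1: "hE (a+1) 0 \<in> M' \<longleftrightarrow> hE (a+1) 0 \<in> M"
    proof -
      have "(hE (a+1) 1 \<in> M' \<longleftrightarrow> hE (a+1) 1 \<in> M) \<and> (hE (a+1) 0 \<in> M' \<longleftrightarrow> hE (a+1) 0 \<in> M)"
      proof (cases "hE a 0 \<in> M \<or> hE (a+3) 0 \<in> M")
        case True
        then have "hE a 0 \<in> M' \<or> hE (a+3) 0 \<in> M'" using B0 B3 by blast
        then show ?thesis using True D(16) D(17) D'(16) D'(17) by blast
      next
        case False
        then have "inR M i (a+1,1)" "inR M i (a+1,-1)" unfolding inR_def Bt_def Ct_def a_def by simp_all
        then have g1: "gM M (a+1,1) \<in> M'" and g2: "gM M (a+1,-1) \<in> M'" using inS[OF i] by blast+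
        have nn: "hE a 0 \<notin> M'" "hE (a+3) 0 \<notin> M'" using False B0 B3 by blast+
        have t: "hE (a+1) 1 \<in> M' \<longleftrightarrow> hE (a+1) 1 \<in> M"
        proof (cases "hE (a+1) 1 \<in> M")
          case True then show ?thesis using g1 by (simp add: gM_def)
        next
          case False
          then have "hE (a+2) 1 \<in> M'" using g1 by (simp add: gM_def ac_simps)
          then show ?thesis using False D'(9) by blast
        qed
        have b: "hE (a+1) 0 \<in> M' \<longleftrightarrow> hE (a+1) 0 \<in> M"
        proof (cases "hE (a+1) 0 \<in> M")
          case True then show ?thesis using g2 by (simp add: gM_def)
        next
          case False
          then have "hE (a+2) 0 \<in> M'" using g2 by (simp add: gM_def ac_simps)
          then show ?thesis using False D'(15) by blast
        qed
        show ?thesis using t b by blast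
      qed
      then show "hE (a+1) 1 \<in> M' \<longleftrightarrow> hE (a+1) 1 \<in> M" "hE (a+1) 0 \<in> M' \<longleftrightarrow> hE (a+1) 0 \<in> M" by blast+
    qed
    from e have "e \<in> loc a" unfolding a_def .
    then show ?thesis unfolding loc_def
      by (elim insertE emptyE; simp only: D(1-15) D'(1-15) B0 B3 BL BR T1 B1)
  qed
  show ?thesis
  proof
    show "M' \<subseteq> M"
    proof
      fix e assume "e \<in> M'"
      then have "e \<in> pyrene_E n" using PM' unfolding perfect_matching_def by blast
      then obtain i where "i < n" "e \<in> loc (4 * int i)" using E_loc by blast
      then show "e \<in> M" using loc_agree \<open>e \<in> M'\<close> by blast
    qed
    show "M \<subseteq> M'"
    proof
      fix e assume "e \<in> M"
      then have "e \<in> pyrene_E n" using PM unfolding perfect_matching_def by blast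
      then obtain i where "i < n" "e \<in> loc (4 * int i)" using E_loc by blast
      then show "e \<in> M'" using loc_agree \<open>e \<in> M\<close> by blast
    qed
  qed
qed


lemma finE: "finite (pyrene_E n)" unfolding E_eq loc_def by simp
lemma finH: "finite (pyrene_hexagons n)" unfolding pyrene_hexagons_def by simp

lemma lower:
  assumes PM: "perfect_matching (pyrene_V n) (pyrene_E n) M"
    and F: "forcing_set (pyrene_V n) (pyrene_E n) M S"
    and R: "resonant_set (pyrene_hexagons n) M R"
  shows "card R \<le> card S"
proof -
  have SM: "S \<subseteq> M" using F unfolding forcing_set_def by blast
  have ne: "\<exists>e. e \<in> S \<and> e \<in> hex_edges c" if c: "c \<in> R" for c
  proof (rule ccontr)
    assume "\<not> ?thesis"
    then have disj: "S \<inter> hex_edges c = {}" by blast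
    have cH: "c \<in> pyrene_hexagons n" and alt: "alternating_cycle M (hex_elist c)"
      using R c unfolding resonant_set_def by blast+
    define M' where "M' = (M - hex_edges c) \<union> (hex_edges c - M)"
    have PM': "perfect_matching (pyrene_V n) (pyrene_E n) M'"
      unfolding M'_def by (rule flip_hex[OF PM cH alt])
    have "S \<subseteq> M'" using SM disj unfolding M'_def by blast
    then have eq: "M' = M" using F PM' unfolding forcing_set_def by blast
    obtain x y where xy: "c = (x,y)" by (cases c)
    have h: "hE x y \<in> hex_edges c" unfolding xy hex_edges_eq by simp
    show False
    proof (cases "hE x y \<in> M")
      case True then have "hE x y \<notin> M'" using h unfolding M'_def by blast
      then show False using eq True by simp
    next
      case False then have "hE x y \<in> M'" using h unfolding M'_def by blast
      then show False using eq False by simp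
    qed
  qed
  then obtain f where f: "\<And>c. c \<in> R \<Longrightarrow> f c \<in> S \<and> f c \<in> hex_edges c" by metis
  have inj: "inj_on f R"
  proof (rule inj_onI)
    fix c d assume c: "c \<in> R" and d: "d \<in> R" and eq: "f c = f d"
    show "c = d"
    proof (rule ccontr)
      assume "c \<noteq> d"
      then have "hex_verts c \<inter> hex_verts d = {}" using R c d unfolding resonant_set_def by blast
      moreover have "f c \<subseteq> hex_verts c" "f c \<noteq> {}" using hex_edge_sub f[OF c] by blast+
      moreover have "f c \<subseteq> hex_verts d" using hex_edge_sub f[OF d] eq by metis
      ultimately show False by blast
    qed
  qed
  have finS: "finite S" using SM PM finE[of n] unfolding perfect_matching_def by (meson finite_subset)
  show ?thesis using card_inj_on_le[OF inj _ finS] f by blast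
qed

theorem lemma2p3:
  fixes n :: nat and M :: "edge set"
  assumes "n \<ge> 1"
    and "perfect_matching (pyrene_V n) (pyrene_E n) M"
  shows "forcing_number (pyrene_V n) (pyrene_E n) M = max_resonant (pyrene_hexagons n) M"
proof -
  note PM = assms(2)
  define FS where "FS = {S. forcing_set (pyrene_V n) (pyrene_E n) M S}"
  define RS where "RS = {R. resonant_set (pyrene_hexagons n) M R}"
  have MfinE: "finite M" using PM finE[of n] unfolding perfect_matching_def by (meson finite_subset)
  have S0: "gM M ` R0 n M \<in> FS"
    unfolding FS_def forcing_set_def
  proof (intro CollectI conjI allI impI)
    show "gM M ` R0 n M \<subseteq> M" using g_in[OF PM] by blast
    fix M' assume "perfect_matching (pyrene_V n) (pyrene_E n) M' \<and> gM M ` R0 n M \<subseteq> M'"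
    then show "M' = M" using forcing0[OF PM] by blast
  qed
  have R0in: "R0 n M \<in> RS" unfolding RS_def using R0_res[OF PM] by blast
  have finR0: "finite (R0 n M)" using R0_res[OF PM] finH[of n] unfolding resonant_set_def
    by (meson finite_subset)
  have le0: "card (gM M ` R0 n M) \<le> card (R0 n M)" using card_image_le[OF finR0] .
  have low: "card R \<le> card S" if "S \<in> FS" "R \<in> RS" for S R
    using lower[OF PM] that unfolding FS_def RS_def by blast
  have finFS: "finite (card ` FS)"
  proof -
    have "FS \<subseteq> Pow M" unfolding FS_def forcing_set_def by blast
    then show ?thesis using MfinE by (meson finite_Pow_iff finite_imageI finite_subset)
  qed
  have finRS: "finite (card ` RS)"
  proof -
    have "RS \<subseteq> Pow (pyrene_hexagons n)" unfolding RS_def resonant_set_def by blast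
    then show ?thesis using finH[of n] by (meson finite_Pow_iff finite_imageI finite_subset)
  qed
  have neF: "card ` FS \<noteq> {}" using S0 by blast
  have neR: "card ` RS \<noteq> {}" using R0in by blast
  have "Min (card ` FS) \<le> Max (card ` RS)"
  proof -
    have "Min (card ` FS) \<le> card (gM M ` R0 n M)" using Min_le[OF finFS] S0 by blast
    also have "\<dots> \<le> card (R0 n M)" by (rule le0)
    also have "\<dots> \<le> Max (card ` RS)" using Max_ge[OF finRS] R0in by blast
    finally show ?thesis .
  qed
  moreover have "Max (card ` RS) \<le> Min (card ` FS)"
  proof -
    obtain R1 where "R1 \<in> RS" "Max (card ` RS) = card R1" using Max_in[OF finRS neR] by blast
    moreover obtain S1 where "S1 \<in> FS" "Min (card ` FS) = card S1" using Min_in[OF finFS neF] by blast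
    ultimately show ?thesis using low by simp
  qed
  ultimately show ?thesis unfolding forcing_number_def max_resonant_def FS_def RS_def by simp
qed


end
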